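(* Let $\Omega$ be a metric space, $\mathcal{FV}(\Omega)$ a dom-space and $T\colon\mathcal{FV}(\Omega)\to\mathcal{CC}(\Omega)$ continuous and linear. Then the map $\delta\circ T\colon\Omega\to\mathcal{FV}(\Omega)'_\gamma$, $x\mapsto\delta_x\circ T$, is well-defined and Cauchy continuous.
   Context: $\mathbb{K}\in\{\mathbb{R},\mathbb{C}\}$. A map between metric/uniform spaces is Cauchy continuous if it maps Cauchy sequences to Cauchy sequences; $\mathcal{CC}(\Omega)$ is the space of Cauchy continuous $\mathbb{K}$-valued functions on $\Omega$ with the topology of uniform convergence on precompact subsets of $\Omega$. $\mathcal{FV}(\Omega)'_\gamma$: dual with the topology of uniform convergence on precompact subsets. $(\delta_x\circ T)(f):=T(f)(x)$. Framework: $J,M$ non-empty index sets, $(\omega_m)_{m\in M}$ non-empty sets, $\nu_{j,m}\colon\omega_m\to[0,\infty)$ such that for all $m$, $x\in\omega_m$ some $\nu_{j,m}(x)>0$; $\operatorname{AP}(\Omega)\subset\mathbb{K}^\Omega$ a linear subspace; $T_m\colon\operatorname{dom}T_m\to\mathbb{K}^{\omega_m}$ linear maps on linear subspaces of $\mathbb{K}^\Omega$; $\mathcal{FV}(\Omega):=\{f\in\operatorname{AP}(\Omega)\cap\bigcap_m\operatorname{dom}T_m: |f|_{j,m}:=\sup_{x\in\omega_m}|T_m(f)(x)|\nu_{j,m}(x)<\infty\ \forall j,m\}$ with these seminorms. It is a dom-space if it is Hausdorff, the seminorms are directed and every $\delta_x\colon f\mapsto f(x)$ belongs to $\mathcal{FV}(\Omega)'$.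 *)

theory Defs
  imports "HOL-Analysis.Analysis" "HOL-Library.Function_Algebras"
begin

(* Scalar field K: a type of class real_normed_field (by Mazur's theorem this is R or C
   up to isomorphism).  Omega is the whole of a type 'a :: metric_space, so K^Omega is
   'a => 'k.  The index sets J and M are the types 'j and 'm (non-empty by construction);
   all omega_m live in a common type 'w. *)

definition K_subspace :: "('a \<Rightarrow> 'k::real_normed_field) set \<Rightarrow> bool" where
  "K_subspace S \<longleftrightarrow> (\<lambda>x. 0) \<in> S \<and> (\<forall>f\<in>S. \<forall>g\<in>S. f + g \<in> S)
      \<and> (\<forall>c::'k. \<forall>f\<in>S. (\<lambda>x. c * f x) \<in> S)"

definition K_linear_on :: "('a \<Rightarrow> 'k::real_normed_field) set \<Rightarrow> (('a \<Rightarrow> 'k) \<Rightarrow> 'b \<Rightarrow> 'k) \<Rightarrow> bool" where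
  "K_linear_on S T \<longleftrightarrow> (\<forall>f\<in>S. \<forall>g\<in>S. T (f + g) = T f + T g)
      \<and> (\<forall>c::'k. \<forall>f\<in>S. T (\<lambda>x. c * f x) = (\<lambda>y. c * T f y))"

definition K_linear_functional_on :: "('a \<Rightarrow> 'k::real_normed_field) set \<Rightarrow> (('a \<Rightarrow> 'k) \<Rightarrow> 'k) \<Rightarrow> bool" where
  "K_linear_functional_on S \<phi> \<longleftrightarrow> (\<forall>f\<in>S. \<forall>g\<in>S. \<phi> (f + g) = \<phi> f + \<phi> g)
      \<and> (\<forall>c::'k. \<forall>f\<in>S. \<phi> (\<lambda>x. c * f x) = c * \<phi> f)"

definition framework ::
  "('a \<Rightarrow> 'k::real_normed_field) set \<Rightarrow> ('m \<Rightarrow> ('a \<Rightarrow> 'k) set) \<Rightarrow> ('m \<Rightarrow> ('a \<Rightarrow> 'k) \<Rightarrow> 'w \<Rightarrow> 'k)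
   \<Rightarrow> ('j \<Rightarrow> 'm \<Rightarrow> 'w \<Rightarrow> real) \<Rightarrow> ('m \<Rightarrow> 'w set) \<Rightarrow> bool" where
  "framework AP domT Tm \<nu> \<omega> \<longleftrightarrow>
     (\<forall>m. \<omega> m \<noteq> {}) \<and> (\<forall>j m x. \<nu> j m x \<ge> 0) \<and> (\<forall>m. \<forall>x\<in>\<omega> m. \<exists>j. \<nu> j m x > 0)
     \<and> K_subspace AP \<and> (\<forall>m. K_subspace (domT m)) \<and> (\<forall>m. K_linear_on (domT m) (Tm m))"

definition FVsemi ::
  "('m \<Rightarrow> ('a \<Rightarrow> 'k::real_normed_field) \<Rightarrow> 'w \<Rightarrow> 'k) \<Rightarrow> ('j \<Rightarrow> 'm \<Rightarrow> 'w \<Rightarrow> real) \<Rightarrow> ('m \<Rightarrow> 'w set)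
   \<Rightarrow> 'j \<Rightarrow> 'm \<Rightarrow> ('a \<Rightarrow> 'k) \<Rightarrow> real" where
  "FVsemi Tm \<nu> \<omega> j m f = (SUP x\<in>\<omega> m. norm (Tm m f x) * \<nu> j m x)"

definition FV ::
  "('a \<Rightarrow> 'k::real_normed_field) set \<Rightarrow> ('m \<Rightarrow> ('a \<Rightarrow> 'k) set) \<Rightarrow> ('m \<Rightarrow> ('a \<Rightarrow> 'k) \<Rightarrow> 'w \<Rightarrow> 'k)
   \<Rightarrow> ('j \<Rightarrow> 'm \<Rightarrow> 'w \<Rightarrow> real) \<Rightarrow> ('m \<Rightarrow> 'w set) \<Rightarrow> ('a \<Rightarrow> 'k) set" where
  "FV AP domT Tm \<nu> \<omega> = {f. f \<in> AP \<and> (\<forall>m. f \<in> domT m)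
      \<and> (\<forall>j m. bdd_above ((\<lambda>x. norm (Tm m f x) * \<nu> j m x) ` \<omega> m))}"

text \<open>Continuity of a linear functional on FV (locally convex topology generated by
  the seminorms): bounded by a constant times finitely many seminorms.\<close>
definition FV_dual_elem ::
  "('a \<Rightarrow> 'k::real_normed_field) set \<Rightarrow> ('m \<Rightarrow> ('a \<Rightarrow> 'k) set) \<Rightarrow> ('m \<Rightarrow> ('a \<Rightarrow> 'k) \<Rightarrow> 'w \<Rightarrow> 'k)
   \<Rightarrow> ('j \<Rightarrow> 'm \<Rightarrow> 'w \<Rightarrow> real) \<Rightarrow> ('m \<Rightarrow> 'w set) \<Rightarrow> (('a \<Rightarrow> 'k) \<Rightarrow> 'k) \<Rightarrow> bool" where
  "FV_dual_elem AP domT Tm \<nu> \<omega> \<phi> \<longleftrightarrow>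
     K_linear_functional_on (FV AP domT Tm \<nu> \<omega>) \<phi> \<and>
     (\<exists>S C. finite S \<and> (\<forall>f\<in>FV AP domT Tm \<nu> \<omega>.
        norm (\<phi> f) \<le> C * (\<Sum>(j,m)\<in>S. FVsemi Tm \<nu> \<omega> j m f)))"

definition dom_space ::
  "('a \<Rightarrow> 'k::real_normed_field) set \<Rightarrow> ('m \<Rightarrow> ('a \<Rightarrow> 'k) set) \<Rightarrow> ('m \<Rightarrow> ('a \<Rightarrow> 'k) \<Rightarrow> 'w \<Rightarrow> 'k)
   \<Rightarrow> ('j \<Rightarrow> 'm \<Rightarrow> 'w \<Rightarrow> real) \<Rightarrow> ('m \<Rightarrow> 'w set) \<Rightarrow> bool" where
  "dom_space AP domT Tm \<nu> \<omega> \<longleftrightarrow>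
     framework AP domT Tm \<nu> \<omega>
     \<and> (\<forall>f\<in>FV AP domT Tm \<nu> \<omega>. f \<noteq> (\<lambda>x. 0) \<longrightarrow> (\<exists>j m. FVsemi Tm \<nu> \<omega> j m f > 0))
     \<and> (\<forall>j1 m1 j2 m2. \<exists>j3 m3 C. C > 0 \<and> (\<forall>f\<in>FV AP domT Tm \<nu> \<omega>.
           FVsemi Tm \<nu> \<omega> j1 m1 f \<le> C * FVsemi Tm \<nu> \<omega> j3 m3 f \<and>
           FVsemi Tm \<nu> \<omega> j2 m2 f \<le> C * FVsemi Tm \<nu> \<omega> j3 m3 f))
     \<and> (\<forall>x. FV_dual_elem AP domT Tm \<nu> \<omega> (\<lambda>f. f x))"

definition CC :: "('a::metric_space \<Rightarrow> 'k::real_normed_field) set" where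
  "CC = {f. \<forall>X. Cauchy X \<longrightarrow> Cauchy (\<lambda>n. f (X n))}"

text \<open>T : FV -> CC continuous and linear, CC carrying the topology of uniform
  convergence on precompact (= totally bounded) subsets of Omega.\<close>
definition FV_to_CC_cont_linear ::
  "('a::metric_space \<Rightarrow> 'k::real_normed_field) set \<Rightarrow> ('m \<Rightarrow> ('a \<Rightarrow> 'k) set) \<Rightarrow> ('m \<Rightarrow> ('a \<Rightarrow> 'k) \<Rightarrow> 'w \<Rightarrow> 'k)
   \<Rightarrow> ('j \<Rightarrow> 'm \<Rightarrow> 'w \<Rightarrow> real) \<Rightarrow> ('m \<Rightarrow> 'w set) \<Rightarrow> (('a \<Rightarrow> 'k) \<Rightarrow> 'a \<Rightarrow> 'k) \<Rightarrow> bool" where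
  "FV_to_CC_cont_linear AP domT Tm \<nu> \<omega> T \<longleftrightarrow>
     (\<forall>f\<in>FV AP domT Tm \<nu> \<omega>. T f \<in> CC)
     \<and> K_linear_on (FV AP domT Tm \<nu> \<omega>) T
     \<and> (\<forall>K. totally_bounded K \<longrightarrow> (\<exists>S C. finite S \<and> (\<forall>f\<in>FV AP domT Tm \<nu> \<omega>. \<forall>x\<in>K.
           norm (T f x) \<le> C * (\<Sum>(j,m)\<in>S. FVsemi Tm \<nu> \<omega> j m f))))"

definition FV_precompact ::
  "('a \<Rightarrow> 'k::real_normed_field) set \<Rightarrow> ('m \<Rightarrow> ('a \<Rightarrow> 'k) set) \<Rightarrow> ('m \<Rightarrow> ('a \<Rightarrow> 'k) \<Rightarrow> 'w \<Rightarrow> 'k)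
   \<Rightarrow> ('j \<Rightarrow> 'm \<Rightarrow> 'w \<Rightarrow> real) \<Rightarrow> ('m \<Rightarrow> 'w set) \<Rightarrow> ('a \<Rightarrow> 'k) set \<Rightarrow> bool" where
  "FV_precompact AP domT Tm \<nu> \<omega> B \<longleftrightarrow> B \<subseteq> FV AP domT Tm \<nu> \<omega> \<and>
     (\<forall>S e. finite S \<longrightarrow> e > 0 \<longrightarrow> (\<exists>F. finite F \<and> F \<subseteq> FV AP domT Tm \<nu> \<omega> \<and>
        B \<subseteq> (\<Union>g\<in>F. {f. (\<Sum>(j,m)\<in>S. FVsemi Tm \<nu> \<omega> j m (f - g)) < e})))"

definition FV_dual_gamma_Cauchy ::
  "('a \<Rightarrow> 'k::real_normed_field) set \<Rightarrow> ('m \<Rightarrow> ('a \<Rightarrow> 'k) set) \<Rightarrow> ('m \<Rightarrow> ('a \<Rightarrow> 'k) \<Rightarrow> 'w \<Rightarrow> 'k)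
   \<Rightarrow> ('j \<Rightarrow> 'm \<Rightarrow> 'w \<Rightarrow> real) \<Rightarrow> ('m \<Rightarrow> 'w set) \<Rightarrow> (nat \<Rightarrow> ('a \<Rightarrow> 'k) \<Rightarrow> 'k) \<Rightarrow> bool" where
  "FV_dual_gamma_Cauchy AP domT Tm \<nu> \<omega> \<Phi> \<longleftrightarrow>
     (\<forall>B. FV_precompact AP domT Tm \<nu> \<omega> B \<longrightarrow>
        (\<forall>e>0. \<exists>N. \<forall>n\<ge>N. \<forall>k\<ge>N. \<forall>f\<in>B. norm (\<Phi> n f - \<Phi> k f) < e))"

end

theory Submission
  imports Defs
begin

lemma tb_Cauchy_range:
  fixes X :: "nat \<Rightarrow> 'a::metric_space"
  assumes "Cauchy X" shows "totally_bounded (range X)"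
  unfolding totally_bounded_metric
proof (intro allI impI)
  fix e :: real assume "e > 0"
  then obtain N where N: "\<And>m n. m \<ge> N \<Longrightarrow> n \<ge> N \<Longrightarrow> dist (X m) (X n) < e"
    using assms unfolding Cauchy_def by blast
  have "range X \<subseteq> (\<Union>x\<in>X ` {0..N}. {y. dist x y < e})"
  proof
    fix y assume "y \<in> range X"
    then obtain n where y: "y = X n" by auto
    show "y \<in> (\<Union>x\<in>X ` {0..N}. {y. dist x y < e})"
    proof (cases "n \<le> N")
      case True then show ?thesis using y \<open>e>0\<close> by force
    next
      case False then show ?thesis using y N[of N n] by force
    qed
  qed
  then show "\<exists>k. finite k \<and> range X \<subseteq> (\<Union>x\<in>k. {y. dist x y < e})" by blast
qed

lemma tb_single: "totally_bounded {x::'a::metric_space}"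
  unfolding totally_bounded_metric
  by (intro allI impI exI[of _ "{x}"]) auto

lemma FV_scale:
  assumes "framework AP domT Tm \<nu> \<omega>" "g \<in> FV AP domT Tm \<nu> \<omega>"
  shows "(\<lambda>x. c * g x) \<in> FV AP domT Tm \<nu> \<omega>"
proof -
  have sub: "\<And>S. K_subspace S \<Longrightarrow> g \<in> S \<Longrightarrow> (\<lambda>x. c * g x) \<in> S"
    unfolding K_subspace_def by blast
  have AP: "(\<lambda>x. c * g x) \<in> AP" using assms sub unfolding framework_def FV_def by auto
  have D: "\<forall>m. (\<lambda>x. c * g x) \<in> domT m" using assms sub unfolding framework_def FV_def by auto
  have B: "bdd_above ((\<lambda>x. norm (Tm m (\<lambda>x. c * g x) x) * \<nu> j m x) ` \<omega> m)" for j m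
  proof -
    have lin: "K_linear_on (domT m) (Tm m)" and gd: "g \<in> domT m"
      using assms unfolding framework_def FV_def by auto
    have T: "Tm m (\<lambda>x. c * g x) x = c * Tm m g x" for x
      using lin gd unfolding K_linear_on_def by metis
    obtain b where b: "\<And>x. x \<in> \<omega> m \<Longrightarrow> norm (Tm m g x) * \<nu> j m x \<le> b"
      using assms(2) unfolding FV_def bdd_above_def by fastforce
    have "norm (Tm m (\<lambda>x. c * g x) x) * \<nu> j m x \<le> norm c * b" if "x \<in> \<omega> m" for x
      using mult_left_mono[OF b[OF that], of "norm c"] unfolding T by (simp add: norm_mult mult.assoc)
    then show ?thesis unfolding bdd_above_def by blast
  qed
  show ?thesis unfolding FV_def using AP D B by simp
qed

lemma FV_add:
  assumes "framework AP domT Tm \<nu> \<omega>" "f \<in> FV AP domT Tm \<nu> \<omega>" "g \<in> FV AP domT Tm \<nu> \<omega>"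
  shows "f + g \<in> FV AP domT Tm \<nu> \<omega>"
proof -
  have sub: "\<And>S. K_subspace S \<Longrightarrow> f \<in> S \<Longrightarrow> g \<in> S \<Longrightarrow> f + g \<in> S"
    unfolding K_subspace_def by blast
  have AP: "f + g \<in> AP" using assms sub unfolding framework_def FV_def by auto
  have D: "\<forall>m. f + g \<in> domT m" using assms sub unfolding framework_def FV_def by auto
  have B: "bdd_above ((\<lambda>x. norm (Tm m (f + g) x) * \<nu> j m x) ` \<omega> m)" for j m
  proof -
    have lin: "K_linear_on (domT m) (Tm m)" and fd: "f \<in> domT m" and gd: "g \<in> domT m"
      using assms unfolding framework_def FV_def by auto
    have T: "Tm m (f + g) x = Tm m f x + Tm m g x" for x
      using lin fd gd unfolding K_linear_on_def by simp
    obtain a where a: "\<And>x. x \<in> \<omega> m \<Longrightarrow> norm (Tm m f x) * \<nu> j m x \<le> a"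
      using assms(2) unfolding FV_def bdd_above_def by fastforce
    obtain b where b: "\<And>x. x \<in> \<omega> m \<Longrightarrow> norm (Tm m g x) * \<nu> j m x \<le> b"
      using assms(3) unfolding FV_def bdd_above_def by fastforce
    have nn: "\<nu> j m x \<ge> 0" for x using assms(1) unfolding framework_def by auto
    have "norm (Tm m (f + g) x) * \<nu> j m x \<le> a + b" if "x \<in> \<omega> m" for x
    proof -
      have "norm (Tm m (f + g) x) * \<nu> j m x \<le> (norm (Tm m f x) + norm (Tm m g x)) * \<nu> j m x"
        unfolding T by (rule mult_right_mono[OF norm_triangle_ineq nn])
      also have "\<dots> \<le> a + b" using a[OF that] b[OF that] by (simp add: distrib_right)
      finally show ?thesis .
    qed
    then show ?thesis unfolding bdd_above_def by blast
  qed
  show ?thesis unfolding FV_def using AP D B by simp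
qed

lemma FV_diff:
  assumes "framework AP domT Tm \<nu> \<omega>" "f \<in> FV AP domT Tm \<nu> \<omega>" "g \<in> FV AP domT Tm \<nu> \<omega>"
  shows "f - g \<in> FV AP domT Tm \<nu> \<omega>"
proof -
  have eq: "f - g = f + (\<lambda>x. (-1) * g x)" by (simp add: fun_eq_iff)
  show ?thesis unfolding eq by (intro FV_add FV_scale assms)
qed

lemma FVsemi_nonneg:
  assumes "framework AP domT Tm \<nu> \<omega>" "f \<in> FV AP domT Tm \<nu> \<omega>"
  shows "FVsemi Tm \<nu> \<omega> j m f \<ge> 0"
proof -
  obtain x where x: "x \<in> \<omega> m" using assms(1) unfolding framework_def by blast
  have "0 \<le> norm (Tm m f x) * \<nu> j m x" using assms(1) unfolding framework_def by auto
  also have "\<dots> \<le> FVsemi Tm \<nu> \<omega> j m f" unfolding FVsemi_def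
    by (rule cSUP_upper[OF x]) (use assms(2) in \<open>auto simp: FV_def\<close>)
  finally show ?thesis .
qed

lemma sum_FVsemi_nonneg:
  assumes "framework AP domT Tm \<nu> \<omega>" "f \<in> FV AP domT Tm \<nu> \<omega>"
  shows "(\<Sum>(j,m)\<in>S. FVsemi Tm \<nu> \<omega> j m f) \<ge> 0"
  using FVsemi_nonneg[OF assms] by (intro sum_nonneg) (auto split: prod.splits)

theorem lemma4p5:
  fixes AP :: "('a::metric_space \<Rightarrow> 'k::{real_normed_field,banach}) set"
    and domT :: "'m \<Rightarrow> ('a \<Rightarrow> 'k) set"
    and Tm :: "'m \<Rightarrow> ('a \<Rightarrow> 'k) \<Rightarrow> 'w \<Rightarrow> 'k"
    and \<nu> :: "'j \<Rightarrow> 'm \<Rightarrow> 'w \<Rightarrow> real"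
    and \<omega> :: "'m \<Rightarrow> 'w set"
    and T :: "('a \<Rightarrow> 'k) \<Rightarrow> 'a \<Rightarrow> 'k"
  assumes "dom_space AP domT Tm \<nu> \<omega>"
    and "FV_to_CC_cont_linear AP domT Tm \<nu> \<omega> T"
  shows "(\<forall>x. FV_dual_elem AP domT Tm \<nu> \<omega> (\<lambda>f. T f x))
     \<and> (\<forall>X::nat \<Rightarrow> 'a. Cauchy X \<longrightarrow> FV_dual_gamma_Cauchy AP domT Tm \<nu> \<omega> (\<lambda>n f. T f (X n)))"
proof -
  let ?FV = "FV AP domT Tm \<nu> \<omega>"
  let ?p = "\<lambda>S f. (\<Sum>(j,m)\<in>S. FVsemi Tm \<nu> \<omega> j m f)"
  have fw: "framework AP domT Tm \<nu> \<omega>" using assms(1) unfolding dom_space_def by blast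
  have CC: "\<And>f. f \<in> ?FV \<Longrightarrow> T f \<in> CC" and lin: "K_linear_on ?FV T"
    and cont: "\<And>K. totally_bounded K \<Longrightarrow> \<exists>S C. finite S \<and> (\<forall>f\<in>?FV. \<forall>x\<in>K.
           norm (T f x) \<le> C * ?p S f)"
    using assms(2) unfolding FV_to_CC_cont_linear_def by blast+
  have Tadd: "\<And>f g. f \<in> ?FV \<Longrightarrow> g \<in> ?FV \<Longrightarrow> T (f + g) = T f + T g"
    and Tsc: "\<And>c f. f \<in> ?FV \<Longrightarrow> T (\<lambda>x. c * f x) = (\<lambda>y. c * T f y)"
    using lin unfolding K_linear_on_def by simp_all
  have Tdiff: "T (f - g) x = T f x - T g x" if "f \<in> ?FV" "g \<in> ?FV" for f g x
  proof -
    have eq: "f - g = f + (\<lambda>x. (-1) * g x)" by (simp add: fun_eq_iff)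
    have gs: "(\<lambda>x. (-1) * g x) \<in> ?FV" by (rule FV_scale[OF fw that(2)])
    have "T (f - g) = T f + T (\<lambda>x. (-1) * g x)"
      unfolding eq by (rule Tadd[OF that(1) gs])
    also have "T (\<lambda>x. (-1) * g x) = (\<lambda>y. (-1) * T g y)"
      by (rule Tsc[OF that(2)])
    finally have "T (f - g) = T f + (\<lambda>y. (-1) * T g y)" .
    then show ?thesis by simp
  qed
  have part1: "FV_dual_elem AP domT Tm \<nu> \<omega> (\<lambda>f. T f x)" for x
  proof -
    obtain S C where "finite S" "\<forall>f\<in>?FV. \<forall>y\<in>{x}. norm (T f y) \<le> C * ?p S f"
      using cont[OF tb_single] by blast
    moreover have "K_linear_functional_on ?FV (\<lambda>f. T f x)"
      using lin unfolding K_linear_on_def K_linear_functional_on_def by simp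
    ultimately show ?thesis unfolding FV_dual_elem_def by blast
  qed
  have part2: "FV_dual_gamma_Cauchy AP domT Tm \<nu> \<omega> (\<lambda>n f. T f (X n))" if X: "Cauchy X" for X :: "nat \<Rightarrow> 'a"
    unfolding FV_dual_gamma_Cauchy_def
  proof (intro allI impI)
    fix B e assume pB: "FV_precompact AP domT Tm \<nu> \<omega> B" and e: "(e::real) > 0"
    obtain S C where S: "finite S" and SC: "\<And>f y. f \<in> ?FV \<Longrightarrow> y \<in> range X \<Longrightarrow> norm (T f y) \<le> C * ?p S f"
      using cont[OF tb_Cauchy_range[OF X]] by blast
    define C' where "C' = max C 1"
    have C': "C' > 0" unfolding C'_def by simp
    have SC': "norm (T f (X n)) \<le> C' * ?p S f" if "f \<in> ?FV" for f n
    proof -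
      have "norm (T f (X n)) \<le> C * ?p S f" using SC[OF that] by simp
      also have "\<dots> \<le> C' * ?p S f" unfolding C'_def
        by (rule mult_right_mono[OF _ sum_FVsemi_nonneg[OF fw that]]) simp
      finally show ?thesis .
    qed
    define d where "d = e / (3 * C')"
    have d: "d > 0" using e C' unfolding d_def by simp
    have pB': "B \<subseteq> ?FV" "\<And>S e. finite S \<Longrightarrow> e > 0 \<Longrightarrow> (\<exists>F. finite F \<and> F \<subseteq> ?FV \<and>
        B \<subseteq> (\<Union>g\<in>F. {f. ?p S (f - g) < e}))"
      using pB unfolding FV_precompact_def by simp_all
    obtain F where F: "finite F" "F \<subseteq> ?FV" and BF: "B \<subseteq> (\<Union>g\<in>F. {f. ?p S (f - g) < d})"
      using pB'(2)[OF S d] by blast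
    have BFV: "B \<subseteq> ?FV" by (rule pB'(1))
    have NG: "\<exists>N. \<forall>g\<in>G. \<forall>n\<ge>N. \<forall>k\<ge>N. norm (T g (X n) - T g (X k)) < e / 3" if "finite G" "G \<subseteq> ?FV" for G
      using that
    proof (induction G rule: finite_induct)
      case empty then show ?case by blast
    next
      case (insert g G)
      then obtain N1 where N1: "\<forall>g\<in>G. \<forall>n\<ge>N1. \<forall>k\<ge>N1. norm (T g (X n) - T g (X k)) < e / 3" by blast
      have "Cauchy (\<lambda>n. T g (X n))" using CC[of g] insert X unfolding CC_def by blast
      moreover have "e / 3 > 0" using e by simp
      ultimately obtain N2 where N2: "\<And>n k. n \<ge> N2 \<Longrightarrow> k \<ge> N2 \<Longrightarrow> dist (T g (X n)) (T g (X k)) < e / 3"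
        unfolding Cauchy_def by blast
      have "\<forall>h\<in>insert g G. \<forall>n\<ge>max N1 N2. \<forall>k\<ge>max N1 N2. norm (T h (X n) - T h (X k)) < e / 3"
      proof (intro ballI allI impI)
        fix h n k assume h: "h \<in> insert g G" and n: "n \<ge> max N1 N2" and k: "k \<ge> max N1 N2"
        show "norm (T h (X n) - T h (X k)) < e / 3"
        proof (cases "h = g")
          case True then show ?thesis using N2[of n k] n k by (simp add: dist_norm)
        next
          case False then have "h \<in> G" using h by simp
          then show ?thesis using N1 n k by simp
        qed
      qed
      then show ?case by blast
    qed
    obtain N where N: "\<And>g n k. g \<in> F \<Longrightarrow> n \<ge> N \<Longrightarrow> k \<ge> N \<Longrightarrow> norm (T g (X n) - T g (X k)) < e / 3"
      using NG[OF F] by blast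
    show "\<exists>N. \<forall>n\<ge>N. \<forall>k\<ge>N. \<forall>f\<in>B. norm (T f (X n) - T f (X k)) < e"
    proof (intro exI[of _ N] allI impI ballI)
      fix n k f assume n: "n \<ge> N" and k: "k \<ge> N" and f: "f \<in> B"
      then obtain g where g: "g \<in> F" and fg: "?p S (f - g) < d" using BF by blast
      have fFV: "f \<in> ?FV" using f BFV by blast
      have gFV: "g \<in> ?FV" using g F by blast
      have fgFV: "f - g \<in> ?FV" by (rule FV_diff[OF fw fFV gFV])
      have bd: "norm (T (f - g) (X i)) < e / 3" for i
      proof -
        have "norm (T (f - g) (X i)) \<le> C' * ?p S (f - g)" by (rule SC'[OF fgFV])
        also have "\<dots> < C' * d" using fg C' by simp
        also have "C' * d = e / 3" unfolding d_def using C' by simp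
        finally show ?thesis .
      qed
      have "T f (X n) - T f (X k) = T (f - g) (X n) + (T g (X n) - T g (X k)) - T (f - g) (X k)"
        using Tdiff[OF fFV gFV] by simp
      also have "norm \<dots> \<le> norm (T (f - g) (X n)) + norm (T g (X n) - T g (X k)) + norm (T (f - g) (X k))"
        using norm_triangle_ineq4[of "T (f - g) (X n) + (T g (X n) - T g (X k))" "T (f - g) (X k)"]
          norm_triangle_ineq[of "T (f - g) (X n)" "T g (X n) - T g (X k)"] by linarith
      also have "\<dots> < e / 3 + e / 3 + e / 3" using bd[of n] bd[of k] N[OF g n k] by simp
      finally show "norm (T f (X n) - T f (X k)) < e" by simp
    qed
  qed
  show ?thesis using part1 part2 by blast
qed

end
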